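(* Let ${\bf x}_0\in\mathbb{R}^m$ be a constant (leader state) and consider $n$ followers with states ${\bf x}_i(t)\in\mathbb{R}^m$ and dynamics $$\dot{\bf x}_i(t)=\sum_{j\in\mathcal{N}_i}{\bf K}_{ji}\big({\bf x}_j(t-T_{ji})-{\bf x}_i(t)\big)+\gamma_i{\bf K}_{0i}\big({\bf x}_0-{\bf x}_i(t)\big),\qquad i=1,\dots,n,$$ where $\mathcal{N}_i\subseteq\{1,\dots,n\}\setminus\{i\}$ are fixed neighbor sets among followers, each ${\bf K}_{ji}$ is constant symmetric positive definite, $T_{ji}\ge0$ are constant (possibly different) delays, $\gamma_i\in\{0,1\}$, and ${\bf K}_{0i}$ is a constant symmetric positive definite matrix whenever $\gamma_i=1$. Assume the whole network including the leader (node $0$ with edges $0\to i$ for $\gamma_i=1$) is connected, with $\gamma_i=1$ for at least one $i$, and that the links among followers are either bidirectional with ${\bf K}_{ji}={\bf K}_{ij}$, or unidirectional but formed into closed rings with identical gains within each ring. Then, regardless of the values of the delays and of the initial conditions, ${\bf x}_i(t)\to{\bf x}_0$ as $t\to\infty$ for all $i=1,\dots,n$. *)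

theory Defs
  imports "HOL-Analysis.Analysis"
begin

definition sym_pos_def :: "real^'m^'m \<Rightarrow> bool" where
  "sym_pos_def A \<longleftrightarrow> transpose A = A \<and> (\<forall>v. v \<noteq> 0 \<longrightarrow> v \<bullet> (A *v v) > 0)"

text \<open>Directed links among followers: (j,i) means j is in N i, i.e. i receives from j
  with gain K j i.\<close>
definition links :: "nat \<Rightarrow> (nat \<Rightarrow> nat set) \<Rightarrow> (nat \<times> nat) set" where
  "links n N = {(j, i). i \<in> {1..n} \<and> j \<in> N i}"

definition net_adj :: "nat \<Rightarrow> (nat \<Rightarrow> nat set) \<Rightarrow> (nat \<Rightarrow> real) \<Rightarrow> (nat \<times> nat) set" where
  "net_adj n N \<gamma> =
     {(a, b). (a, b) \<in> links n N \<or> (b, a) \<in> links n N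
        \<or> (a = 0 \<and> b \<in> {1..n} \<and> \<gamma> b = 1) \<or> (b = 0 \<and> a \<in> {1..n} \<and> \<gamma> a = 1)}"

definition network_connected :: "nat \<Rightarrow> (nat \<Rightarrow> nat set) \<Rightarrow> (nat \<Rightarrow> real) \<Rightarrow> bool" where
  "network_connected n N \<gamma> \<longleftrightarrow> (\<forall>i\<in>{1..n}. (0, i) \<in> (net_adj n N \<gamma>)\<^sup>*)"

definition ring_edges :: "nat list \<Rightarrow> (nat \<times> nat) set" where
  "ring_edges c = {(c ! l, c ! ((l + 1) mod length c)) | l. l < length c}"

definition ring_structure ::
  "nat \<Rightarrow> (nat \<Rightarrow> nat set) \<Rightarrow> (nat \<Rightarrow> nat \<Rightarrow> real^'m^'m) \<Rightarrow> bool" where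
  "ring_structure n N K \<longleftrightarrow>
     (let L = links n N; U = {(j, i). (j, i) \<in> L \<and> (i, j) \<notin> L} in
      (\<forall>(j, i)\<in>L. (i, j) \<in> L \<longrightarrow> K j i = K i j) \<and>
      (\<exists>Rs :: nat list set.
         (\<forall>c\<in>Rs. length c \<ge> 2 \<and> distinct c \<and> ring_edges c \<subseteq> U \<and>
                  (\<exists>G. \<forall>(a, b)\<in>ring_edges c. K a b = G)) \<and>
         (\<forall>e\<in>U. \<exists>!c\<in>Rs. e \<in> ring_edges c)))"

end

theory Submission imports Defs begin

definition qf :: "real^'m^'m \<Rightarrow> real^'m \<Rightarrow> real" where
  "qf K v = v \<bullet> (K *v v)"

definition kn :: "real^'m^'m \<Rightarrow> real" where
  "kn K = onorm ((*v) K)"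

lemma kn_bound: "norm (K *v v) \<le> kn K * norm v"
  unfolding kn_def by (rule onorm) simp

lemma kn_nonneg: "kn K \<ge> 0"
  unfolding kn_def by (rule onorm_pos_le) simp

lemma qf_nonneg: "sym_pos_def K \<Longrightarrow> qf K v \<ge> 0"
  unfolding sym_pos_def_def qf_def
  by (cases "v = 0") (auto intro: less_imp_le)

lemma qf_scale: "qf K (c *\<^sub>R v) = c^2 * qf K v"
  unfolding qf_def by (simp add: matrix_vector_mult_scaleR power2_eq_square)

lemma qf_diff_bound:
  "\<bar>qf K a - qf K b\<bar> \<le> kn K * (norm a + norm b) * norm (a - b)"
proof -
  have eq: "qf K a - qf K b = (a - b) \<bullet> (K *v a) + b \<bullet> (K *v (a - b))"
    unfolding qf_def by (simp add: matrix_vector_mult_diff_distrib inner_diff_left inner_diff_right)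
  have 1: "\<bar>(a - b) \<bullet> (K *v a)\<bar> \<le> norm (a - b) * (kn K * norm a)"
    by (rule order_trans[OF Cauchy_Schwarz_ineq2]) (simp add: kn_bound mult_left_mono)
  have 2: "\<bar>b \<bullet> (K *v (a - b))\<bar> \<le> norm b * (kn K * norm (a - b))"
    by (rule order_trans[OF Cauchy_Schwarz_ineq2]) (simp add: kn_bound mult_left_mono)
  have 3: "kn K * (norm a + norm b) * norm (a - b) = norm (a - b) * (kn K * norm a) + norm b * (kn K * norm (a - b))"
    by (simp add: algebra_simps)
  show ?thesis unfolding eq 3 using 1 2 abs_triangle_ineq[of "(a - b) \<bullet> (K *v a)" "b \<bullet> (K *v (a - b))"] by linarith
qed

lemma sym_inner:
  fixes K :: "real^'m^'m"
  assumes "transpose K = K" shows "d \<bullet> (K *v e) = e \<bullet> (K *v d)"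
proof -
  have "d \<bullet> (K *v e) = (d v* K) \<bullet> e" by (simp add: dot_lmul_matrix)
  also have "\<dots> = (transpose K *v d) \<bullet> e" by simp
  also have "\<dots> = e \<bullet> (K *v d)" using assms by (simp add: inner_commute)
  finally show ?thesis .
qed

lemma qf_pd_lower:
  assumes "sym_pos_def (K::real^'m^'m)"
  shows "\<exists>c>0. \<forall>v. qf K v \<ge> c * (norm v)^2"
proof -
  have cont: "continuous_on (sphere 0 1) (qf K)"
    unfolding qf_def by (intro continuous_intros)
  have ne: "sphere (0::real^'m) 1 \<noteq> {}"
    by (simp add: sphere_def) (metis vector_choose_size zero_le_one)
  obtain u where u: "u \<in> sphere 0 1" "\<forall>y\<in>sphere 0 1. qf K u \<le> qf K y"
    using continuous_attains_inf[OF compact_sphere ne cont] by blast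
  have "u \<noteq> 0" using u by auto
  hence pos: "qf K u > 0" using assms unfolding sym_pos_def_def qf_def by auto
  have "qf K v \<ge> qf K u * (norm v)^2" for v
  proof (cases "v = 0")
    case True then show ?thesis by (simp add: qf_def)
  next
    case False
    have "sgn v \<in> sphere 0 1" using False by (simp add: norm_sgn)
    hence "qf K u \<le> qf K (sgn v)" using u by auto
    moreover have "qf K v = (norm v)^2 * qf K (sgn v)"
    proof -
      have "qf K (sgn v) = (inverse (norm v))^2 * qf K v"
        unfolding sgn_div_norm divide_inverse_commute by (simp add: qf_scale)
      thus ?thesis using False by (simp add: field_simps power2_eq_square)
    qed
    ultimately show ?thesis by (metis mult.commute mult_left_mono zero_le_power2)
  qed
  thus ?thesis using pos by blast
qed

lemma cyc_sum:
  fixes a :: "nat \<Rightarrow> real"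
  assumes "0 < k"
  shows "(\<Sum>l<k. a ((l+1) mod k)) = (\<Sum>l<k. a l)"
proof -
  obtain m where k: "k = Suc m" using assms gr0_implies_Suc by blast
  have "(\<Sum>l<Suc m. a ((l+1) mod Suc m)) = (\<Sum>l<m. a ((l+1) mod Suc m)) + a ((m+1) mod Suc m)"
    by (rule sum.lessThan_Suc)
  also have "(\<Sum>l<m. a ((l+1) mod Suc m)) = (\<Sum>l<m. a (Suc l))"
    by (intro sum.cong) auto
  also have "a ((m+1) mod Suc m) = a 0" by simp
  also have "(\<Sum>l<m. a (Suc l)) + a 0 = (\<Sum>l<Suc m. a l)"
    by (subst sum.lessThan_Suc_shift) simp
  finally show ?thesis using k by simp
qed

lemma ring_sum_zero:
  fixes K :: "nat \<Rightarrow> nat \<Rightarrow> real^'m^'m" and v :: "nat \<Rightarrow> real^'m"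
  assumes len: "length c \<ge> 2" and dist: "distinct c"
    and G: "\<forall>(a, b)\<in>ring_edges c. K a b = G"
  shows "(\<Sum>p\<in>ring_edges c. qf (K (fst p) (snd p)) (v (fst p)) - qf (K (fst p) (snd p)) (v (snd p))) = 0"
proof -
  define k where "k = length c"
  define h where "h = (\<lambda>l. (c ! l, c ! ((l + 1) mod k)))"
  have re: "ring_edges c = h ` {..<k}"
    unfolding ring_edges_def h_def k_def by auto
  have inj: "inj_on h {..<k}"
    unfolding h_def inj_on_def k_def using dist by (auto simp: nth_eq_iff_index_eq)
  have kpos: "0 < k" using len k_def by linarith
  have "(\<Sum>p\<in>ring_edges c. qf (K (fst p) (snd p)) (v (fst p)) - qf (K (fst p) (snd p)) (v (snd p)))
      = (\<Sum>l<k. qf (K (fst (h l)) (snd (h l))) (v (fst (h l))) - qf (K (fst (h l)) (snd (h l))) (v (snd (h l))))"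
    unfolding re by (simp add: sum.reindex[OF inj])
  also have "\<dots> = (\<Sum>l<k. qf G (v (c ! l)) - qf G (v (c ! ((l + 1) mod k))))"
  proof (intro sum.cong refl)
    fix l assume "l \<in> {..<k}"
    hence "h l \<in> ring_edges c" unfolding re by blast
    hence "K (fst (h l)) (snd (h l)) = G" using G by auto
    thus "qf (K (fst (h l)) (snd (h l))) (v (fst (h l))) - qf (K (fst (h l)) (snd (h l))) (v (snd (h l)))
        = qf G (v (c ! l)) - qf G (v (c ! ((l + 1) mod k)))" by (simp add: h_def)
  qed
  also have "\<dots> = (\<Sum>l<k. qf G (v (c ! l))) - (\<Sum>l<k. qf G (v (c ! ((l + 1) mod k))))"
    by (simp add: sum_subtractf)
  also have "(\<Sum>l<k. qf G (v (c ! ((l + 1) mod k)))) = (\<Sum>l<k. qf G (v (c ! l)))"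
    using cyc_sum[OF kpos, of "\<lambda>l. qf G (v (c ! l))"] by simp
  finally show ?thesis by simp
qed

lemma balance:
  fixes K :: "nat \<Rightarrow> nat \<Rightarrow> real^'m^'m" and v :: "nat \<Rightarrow> real^'m"
  assumes nbrs: "\<forall>i\<in>{1..n}. N i \<subseteq> {1..n} - {i}"
    and rs: "ring_structure n N K"
  shows "(\<Sum>i\<in>{1..n}. \<Sum>j\<in>N i. qf (K j i) (v j) - qf (K j i) (v i)) = 0"
proof -
  define L where "L = links n N"
  define U where "U = {(j, i). (j, i) \<in> L \<and> (i, j) \<notin> L}"
  define Bd where "Bd = {(j, i). (j, i) \<in> L \<and> (i, j) \<in> L}"
  define \<phi> where "\<phi> = (\<lambda>p. qf (K (fst p) (snd p)) (v (fst p)) - qf (K (fst p) (snd p)) (v (snd p)))"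
  have Ls: "L = prod.swap ` (Sigma {1..n} N)"
    unfolding L_def links_def by force
  have finN: "\<forall>i\<in>{1..n}. finite (N i)"
    using nbrs by (meson finite_Diff finite_atLeastAtMost finite_subset)
  have finS: "finite (Sigma {1..n} N)"
    using finN by (intro finite_SigmaI) auto
  hence finL: "finite L" unfolding Ls by simp
  have "(\<Sum>i\<in>{1..n}. \<Sum>j\<in>N i. qf (K j i) (v j) - qf (K j i) (v i))
      = (\<Sum>(i, j)\<in>Sigma {1..n} N. qf (K j i) (v j) - qf (K j i) (v i))"
    using finN by (intro sum.Sigma) auto
  also have "\<dots> = sum \<phi> L"
    unfolding Ls by (subst sum.reindex) (auto simp: \<phi>_def intro!: sum.cong)
  also have "L = Bd \<union> U" unfolding Bd_def U_def by auto
  also have "sum \<phi> (Bd \<union> U) = sum \<phi> Bd + sum \<phi> U"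
    by (rule sum.union_disjoint) (use finL in \<open>auto simp: Bd_def U_def intro: finite_subset\<close>)
  also have "sum \<phi> Bd = 0"
  proof -
    have sw: "prod.swap ` Bd = Bd" unfolding Bd_def by force
    have "sum \<phi> Bd = sum (\<phi> \<circ> prod.swap) Bd"
      by (subst sum.reindex[symmetric]) (auto simp: sw)
    also have "\<dots> = sum (\<lambda>p. - \<phi> p) Bd"
    proof (intro sum.cong refl)
      fix p assume p: "p \<in> Bd"
      obtain j i where pe: "p = (j, i)" by (cases p)
      have "K j i = K i j" using rs p pe unfolding ring_structure_def Let_def Bd_def L_def by auto
      thus "(\<phi> \<circ> prod.swap) p = - \<phi> p" by (simp add: pe \<phi>_def)
    qed
    also have "\<dots> = - sum \<phi> Bd" by (simp add: sum_negf)
    finally show ?thesis by simp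
  qed
  also have "sum \<phi> U = 0"
  proof -
    obtain Rs :: "nat list set" where
      R1: "\<forall>c\<in>Rs. length c \<ge> 2 \<and> distinct c \<and> ring_edges c \<subseteq> U \<and>
                  (\<exists>G. \<forall>(a, b)\<in>ring_edges c. K a b = G)" and
      R2: "\<forall>e\<in>U. \<exists>!c\<in>Rs. e \<in> ring_edges c"
      using rs unfolding ring_structure_def Let_def U_def L_def by blast
    define sel where "sel = (\<lambda>e. THE c. c \<in> Rs \<and> e \<in> ring_edges c)"
    have sel: "e \<in> U \<Longrightarrow> sel e \<in> Rs \<and> e \<in> ring_edges (sel e)" for e
      unfolding sel_def using R2 by (metis (no_types, lifting) theI')
    define R' where "R' = sel ` U"
    have finU: "finite U" using finL unfolding U_def by (auto intro: finite_subset)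
    have finR: "finite R'" unfolding R'_def using finU by simp
    have R'Rs: "R' \<subseteq> Rs" unfolding R'_def using sel by auto
    have Ueq: "U = \<Union> (ring_edges ` R')"
    proof
      show "U \<subseteq> \<Union> (ring_edges ` R')" unfolding R'_def using sel by blast
      show "\<Union> (ring_edges ` R') \<subseteq> U" using R'Rs R1 by blast
    qed
    have finE: "finite (ring_edges c)" for c
    proof -
      have "ring_edges c = (\<lambda>l. (c ! l, c ! ((l + 1) mod length c))) ` {..<length c}"
        unfolding ring_edges_def by auto
      thus ?thesis by simp
    qed
    have "sum \<phi> U = (\<Sum>c\<in>R'. sum \<phi> (ring_edges c))"
      unfolding Ueq
    proof (rule sum.UNION_disjoint[OF finR])
      show "\<forall>c\<in>R'. finite (ring_edges c)" using finE by blast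
      show "\<forall>c\<in>R'. \<forall>d\<in>R'. c \<noteq> d \<longrightarrow> ring_edges c \<inter> ring_edges d = {}"
      proof (intro ballI impI)
        fix c d assume c: "c \<in> R'" and d: "d \<in> R'" and cd: "c \<noteq> d"
        show "ring_edges c \<inter> ring_edges d = {}"
        proof (rule ccontr)
          assume "ring_edges c \<inter> ring_edges d \<noteq> {}"
          then obtain e where e: "e \<in> ring_edges c" "e \<in> ring_edges d" by blast
          hence "e \<in> U" using c R'Rs R1 by blast
          thus False using R2 e c d cd R'Rs by blast
        qed
      qed
    qed
    also have "\<dots> = 0"
    proof (rule sum.neutral, intro ballI)
      fix c assume "c \<in> R'"
      hence c: "c \<in> Rs" using R'Rs by blast
      then obtain G where "\<forall>(a, b)\<in>ring_edges c. K a b = G" using R1 by blast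
      thus "sum \<phi> (ring_edges c) = 0" unfolding \<phi>_def
        using ring_sum_zero[of c K G v] R1 c by blast
    qed
    finally show ?thesis .
  qed
  finally show ?thesis by simp
qed

lemma ftc_deriv:
  fixes g :: "real \<Rightarrow> real"
  assumes "continuous_on UNIV g" "a < u"
  shows "((\<lambda>u. integral {a..u} g) has_real_derivative g u) (at u)"
proof -
  have "((\<lambda>u. integral {a..u} g) has_real_derivative g u) (at u within {a..u+1})"
    using assms by (intro integral_has_real_derivative) (auto intro: continuous_on_subset)
  moreover have "u \<in> interior {a..u+1}" using assms by simp
  hence "at u within {a..u+1} = at u" by (rule at_within_interior)
  ultimately show ?thesis by metis
qed

lemma inner_sq_deriv:
  fixes f :: "real \<Rightarrow> real^'m"
  assumes "(f has_vector_derivative v) (at t)"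
  shows "((\<lambda>t. f t \<bullet> f t) has_real_derivative 2 * (f t \<bullet> v)) (at t)"
proof -
  have d: "(f has_derivative (\<lambda>h. h *\<^sub>R v)) (at t)"
    using assms by (simp add: has_vector_derivative_def)
  have "((\<lambda>t. f t \<bullet> f t) has_derivative (\<lambda>h. f t \<bullet> (h *\<^sub>R v) + (h *\<^sub>R v) \<bullet> f t)) (at t)"
    by (rule has_derivative_inner[OF d d])
  moreover have "(\<lambda>h. f t \<bullet> (h *\<^sub>R v) + (h *\<^sub>R v) \<bullet> f t) = (*) (2 * (f t \<bullet> v))"
    by (auto simp: fun_eq_iff inner_commute algebra_simps)
  ultimately show ?thesis by (simp add: has_field_derivative_def)
qed

lemma lip_lt:
  fixes f :: "real \<Rightarrow> real^'m"
  assumes cont: "continuous_on UNIV f"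
    and der: "\<forall>t>t1. (f has_vector_derivative f' t) (at t)"
    and bd: "\<forall>t>t1. norm (f' t) \<le> C"
    and st: "t1 \<le> s" "s < t"
  shows "norm (f t - f s) \<le> C * \<bar>t - s\<bar>"
proof -
  have c2: "continuous_on {s..t} f" using cont by (rule continuous_on_subset) simp
  have d: "\<And>x. s < x \<Longrightarrow> x < t \<Longrightarrow> (f has_derivative (\<lambda>h. h *\<^sub>R f' x)) (at x)"
    using der st by (simp add: has_vector_derivative_def)
  obtain x where x: "x \<in> {s<..<t}" "norm (f t - f s) \<le> norm ((\<lambda>h. h *\<^sub>R f' x) (t - s))"
    using mvt_general[OF st(2) c2 d] by blast
  have "norm ((\<lambda>h. h *\<^sub>R f' x) (t - s)) = \<bar>t - s\<bar> * norm (f' x)" by simp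
  also have "\<dots> \<le> \<bar>t - s\<bar> * C" using bd x st by (intro mult_left_mono) auto
  finally have "norm ((\<lambda>h. h *\<^sub>R f' x) (t - s)) \<le> \<bar>t - s\<bar> * C" .
  thus ?thesis using x(2) by (metis mult.commute order_trans)
qed

lemma lip_from_deriv:
  fixes f :: "real \<Rightarrow> real^'m"
  assumes cont: "continuous_on UNIV f"
    and der: "\<forall>t>t1. (f has_vector_derivative f' t) (at t)"
    and bd: "\<forall>t>t1. norm (f' t) \<le> C"
    and st: "t1 \<le> s" "t1 \<le> t"
  shows "norm (f t - f s) \<le> C * \<bar>t - s\<bar>"
proof -
  consider "s < t" | "s = t" | "t < s" by linarith
  thus ?thesis
  proof cases
    case 1 thus ?thesis using lip_lt[OF cont der bd st(1)] by blast
  next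
    case 2 thus ?thesis by simp
  next
    case 3 thus ?thesis using lip_lt[OF cont der bd st(2) 3]
      by (simp add: norm_minus_commute abs_minus_commute)
  qed
qed

lemma barbalat:
  fixes V f h :: "real \<Rightarrow> real"
  assumes der: "\<forall>t\<ge>t0. (V has_real_derivative - f t) (at t)"
    and hnn: "\<forall>t\<ge>t0. 0 \<le> h t" and hf: "\<forall>t\<ge>t0. h t \<le> f t" and Vnn: "\<forall>t\<ge>t0. V t \<ge> 0"
    and lip: "\<forall>s\<ge>t0. \<forall>t\<ge>t0. \<bar>h t - h s\<bar> \<le> L * \<bar>t - s\<bar>" and L: "L > 0"
  shows "(h \<longlongrightarrow> 0) at_top"
proof (rule tendstoI)
  fix \<epsilon> :: real assume ep: "\<epsilon> > 0"
  have mono: "V t \<le> V s" if "t0 \<le> s" "s \<le> t" for s t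
  proof (rule DERIV_nonpos_imp_nonincreasing[of s t V])
    fix x assume "s \<le> x" "x \<le> t"
    hence x: "x \<ge> t0" using that by linarith
    have "f x \<ge> 0" using hnn hf x by (meson order_trans)
    thus "\<exists>y. DERIV V x :> y \<and> y \<le> 0" using der x by (intro exI[of _ "- f x"]) auto
  qed (use that in auto)
  show "eventually (\<lambda>t. dist (h t) 0 < \<epsilon>) at_top"
  proof (rule ccontr)
    assume "\<not> eventually (\<lambda>t. dist (h t) 0 < \<epsilon>) at_top"
    hence freq: "\<forall>b. \<exists>t\<ge>b. \<not> dist (h t) 0 < \<epsilon>" by (simp add: eventually_at_top_linorder)
    define \<delta> where "\<delta> = \<epsilon> / (2 * L)"
    define c where "c = \<epsilon> * \<delta> / 2"
    have dpos: "\<delta> > 0" using ep L by (simp add: \<delta>_def)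
    have cpos: "c > 0" using ep dpos by (simp add: c_def)
    have drop: "V (t + \<delta>) \<le> V t - c" if t: "t \<ge> t0" "h t \<ge> \<epsilon>" for t
    proof -
      define W where "W = (\<lambda>s. V s + \<epsilon> / 2 * s)"
      have "W (t + \<delta>) \<le> W t"
      proof (rule DERIV_nonpos_imp_nonincreasing[of t "t + \<delta>" W])
        show "t \<le> t + \<delta>" using dpos by simp
        fix s assume s: "t \<le> s" "s \<le> t + \<delta>"
        have "s \<ge> t0" using t s by linarith
        hence "\<bar>h s - h t\<bar> \<le> L * \<bar>s - t\<bar>" using lip t(1) by blast
        also have "\<dots> \<le> L * \<delta>" using s L by (intro mult_left_mono) auto
        also have "L * \<delta> = \<epsilon> / 2" using L by (simp add: \<delta>_def)
        finally have "h s \<ge> \<epsilon> / 2" using t by linarith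
        hence fs: "f s \<ge> \<epsilon> / 2" using hf t s by (meson order_trans)
        have "(W has_real_derivative (- f s + \<epsilon> / 2)) (at s)"
          unfolding W_def using der t s
          by (auto intro!: derivative_eq_intros)
        with fs show "\<exists>y. (W has_real_derivative y) (at s) \<and> y \<le> 0" by (intro exI[of _ "- f s + \<epsilon> / 2"]) auto
      qed
      thus ?thesis by (simp add: W_def c_def field_simps)
    qed
    have iter: "\<exists>t\<ge>t0. V t \<le> V t0 - real m * c" for m :: nat
    proof (induction m)
      case 0 thus ?case by auto
    next
      case (Suc m)
      then obtain t where t: "t \<ge> t0" "V t \<le> V t0 - real m * c" by blast
      obtain s where s: "s \<ge> t" "\<not> dist (h s) 0 < \<epsilon>" using freq by blast
      have hs: "h s \<ge> \<epsilon>" using s hnn t by auto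
      have "V (s + \<delta>) \<le> V s - c" using drop[OF _ hs] s t by auto
      also have "V s \<le> V t" using mono t s by auto
      finally have "V (s + \<delta>) \<le> V t0 - real (Suc m) * c" using t by (simp add: algebra_simps)
      moreover have "s + \<delta> \<ge> t0" using s t dpos by auto
      ultimately show ?case by blast
    qed
    obtain m :: nat where m: "V t0 < real m * c" using reals_Archimedean3[OF cpos] by blast
    obtain t where "t \<ge> t0" "V t \<le> V t0 - real m * c" using iter by blast
    thus False using Vnn m by force
  qed
qed

lemma shift_tendsto:
  fixes f :: "real \<Rightarrow> 'a::topological_space"
  assumes "(f \<longlongrightarrow> l) at_top"
  shows "((\<lambda>t. f (t + c)) \<longlongrightarrow> l) at_top"
proof -
  have "filterlim (\<lambda>t. c + t) at_top at_top"
    by (rule filterlim_tendsto_add_at_top[OF tendsto_const filterlim_ident])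
  hence "filterlim (\<lambda>t. t + c) at_top at_top" by (simp add: add.commute)
  thus ?thesis using filterlim_compose[OF assms] by blast
qed

lemma qf_tendsto_zero:
  assumes K: "sym_pos_def K" and q: "((\<lambda>t. qf K (d t)) \<longlongrightarrow> 0) F"
  shows "(d \<longlongrightarrow> 0) F"
proof -
  obtain c where c: "c > 0" "\<forall>v. qf K v \<ge> c * (norm v)^2" using qf_pd_lower[OF K] by blast
  have "((\<lambda>t. (norm (d t))^2) \<longlongrightarrow> 0) F"
  proof (rule tendsto_sandwich[of "\<lambda>_. 0" _ _ "\<lambda>t. qf K (d t) / c"])
    show "eventually (\<lambda>t. 0 \<le> (norm (d t))^2) F" by simp
    show "eventually (\<lambda>t. (norm (d t))^2 \<le> qf K (d t) / c) F"
      using c by (auto simp: field_simps mult.commute)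
    show "((\<lambda>t. qf K (d t) / c) \<longlongrightarrow> 0) F" using tendsto_divide_zero[OF q] by simp
  qed simp
  hence "((\<lambda>t. sqrt ((norm (d t))^2)) \<longlongrightarrow> sqrt 0) F" by (rule tendsto_real_sqrt)
  hence "((\<lambda>t. norm (d t)) \<longlongrightarrow> 0) F" by simp
  thus ?thesis by (simp add: tendsto_norm_zero_iff)
qed

lemma qf_lip:
  fixes d :: "real \<Rightarrow> real^'m"
  assumes M: "\<forall>t\<ge>t0. norm (d t) \<le> M" and Ld: "Ld \<ge> 0"
    and lip: "\<forall>s\<ge>t0. \<forall>t\<ge>t0. norm (d t - d s) \<le> Ld * \<bar>t - s\<bar>"
  shows "\<forall>s\<ge>t0. \<forall>t\<ge>t0. \<bar>qf K (d t) / 2 - qf K (d s) / 2\<bar> \<le> (kn K * M * Ld + 1) * \<bar>t - s\<bar>"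
proof (intro allI impI)
  fix s t assume s: "s \<ge> t0" and t: "t \<ge> t0"
  have "\<bar>qf K (d t) / 2 - qf K (d s) / 2\<bar> = \<bar>qf K (d t) - qf K (d s)\<bar> / 2"
    by (simp add: diff_divide_distrib[symmetric])
  also have "\<bar>qf K (d t) - qf K (d s)\<bar> \<le> kn K * (norm (d t) + norm (d s)) * norm (d t - d s)"
    by (rule qf_diff_bound)
  also have "\<dots> \<le> kn K * (M + M) * (Ld * \<bar>t - s\<bar>)"
  proof -
    have M0: "M \<ge> 0" using M s by (meson norm_ge_zero order_trans)
    show ?thesis using M lip s t kn_nonneg[of K] M0
      by (intro mult_mono add_mono) auto
  qed
  finally have "\<bar>qf K (d t) / 2 - qf K (d s) / 2\<bar> \<le> kn K * M * Ld * \<bar>t - s\<bar>" by (simp add: field_simps)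
  also have "\<dots> \<le> (kn K * M * Ld + 1) * \<bar>t - s\<bar>" by (simp add: distrib_right)
  finally show "\<bar>qf K (d t) / 2 - qf K (d s) / 2\<bar> \<le> (kn K * M * Ld + 1) * \<bar>t - s\<bar>" .
qed

lemma key_id:
  fixes K :: "real^'m^'m"
  assumes "transpose K = K"
  shows "e \<bullet> (K *v (d - e)) + (qf K w - qf K d) / 2 = - qf K (d - e) / 2 + (qf K w - qf K e) / 2"
  using sym_inner[OF assms, of d e]
  unfolding qf_def by (simp add: matrix_vector_mult_diff_distrib inner_diff_left inner_diff_right field_simps)

theorem theorem4:
  fixes n :: nat
    and x0 :: "real^'m"
    and N :: "nat \<Rightarrow> nat set"
    and K :: "nat \<Rightarrow> nat \<Rightarrow> real^'m^'m"
    and T :: "nat \<Rightarrow> nat \<Rightarrow> real"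
    and \<gamma> :: "nat \<Rightarrow> real"
    and x :: "nat \<Rightarrow> real \<Rightarrow> real^'m"
  assumes nbrs: "\<forall>i\<in>{1..n}. N i \<subseteq> {1..n} - {i}"
    and gains: "\<forall>i\<in>{1..n}. \<forall>j\<in>N i. sym_pos_def (K j i)"
    and delays: "\<forall>i\<in>{1..n}. \<forall>j\<in>N i. T j i \<ge> 0"
    and gamma01: "\<forall>i\<in>{1..n}. \<gamma> i = 0 \<or> \<gamma> i = 1"
    and leader_gains: "\<forall>i\<in>{1..n}. \<gamma> i = 1 \<longrightarrow> sym_pos_def (K 0 i)"
    and some_pinned: "\<exists>i\<in>{1..n}. \<gamma> i = 1"
    and net_connected: "network_connected n N \<gamma>"
    and link_structure: "ring_structure n N K"
    and cont: "\<forall>i\<in>{1..n}. continuous_on UNIV (x i)"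
    and dyn: "\<forall>i\<in>{1..n}. \<forall>t>0.
       (x i has_vector_derivative
          ((\<Sum>j\<in>N i. K j i *v (x j (t - T j i) - x i t)) + \<gamma> i *\<^sub>R (K 0 i *v (x0 - x i t))))
       (at t)"
  shows "\<forall>i\<in>{1..n}. (x i \<longlongrightarrow> x0) at_top"
proof -
  define I where "I = {1..n}"
  have finN: "\<forall>i\<in>I. finite (N i)"
    using nbrs unfolding I_def by (meson finite_Diff finite_atLeastAtMost finite_subset)
  have NI: "\<And>i j. i \<in> I \<Longrightarrow> j \<in> N i \<Longrightarrow> j \<in> I"
    using nbrs unfolding I_def by blast
  define e where "e = (\<lambda>i t. x i t - x0)"
  define Tm where "Tm = (\<Sum>i\<in>I. \<Sum>j\<in>N i. T j i)"
  have TTm: "T j i \<le> Tm" "0 \<le> T j i" if "i \<in> I" "j \<in> N i" for i j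
  proof -
    have "T j i \<le> (\<Sum>j\<in>N i. T j i)"
      using that finN delays unfolding I_def by (intro member_le_sum) auto
    also have "\<dots> \<le> Tm" unfolding Tm_def
      using that finN delays unfolding I_def
      by (intro member_le_sum[of i I "\<lambda>i. \<Sum>j\<in>N i. T j i", unfolded I_def]) (auto intro: sum_nonneg)
    finally show "T j i \<le> Tm" .
    show "0 \<le> T j i" using that delays unfolding I_def by auto
  qed
  have Tm0: "Tm \<ge> 0" unfolding Tm_def using delays unfolding I_def by (auto intro!: sum_nonneg)
  define a where "a = - Tm - 1"
  define g where "g = (\<lambda>j i s. qf (K j i) (e j s))"
  define F where "F = (\<lambda>j i u. integral {a..u} (g j i))"
  define V where "V = (\<lambda>t. \<Sum>i\<in>I. (e i t \<bullet> e i t / 2 + (\<Sum>j\<in>N i. (F j i t - F j i (t - T j i)) / 2)))"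
  define D where "D = (\<lambda>i t. (\<Sum>j\<in>N i. K j i *v (x j (t - T j i) - x i t)) + \<gamma> i *\<^sub>R (K 0 i *v (x0 - x i t)))"
  define q where "q = (\<lambda>j i t. qf (K j i) (e j (t - T j i) - e i t))"
  define p where "p = (\<lambda>i t. \<gamma> i * qf (K 0 i) (e i t))"
  define f where "f = (\<lambda>t. \<Sum>i\<in>I. ((\<Sum>j\<in>N i. q j i t / 2) + p i t))"

  have ce: "continuous_on UNIV (e i)" if "i \<in> I" for i
    using cont that unfolding e_def I_def by (auto intro: continuous_intros)
  have de: "(e i has_vector_derivative D i t) (at t)" if "i \<in> I" "t > 0" for i t
  proof -
    have "(x i has_vector_derivative D i t) (at t)" using dyn that unfolding D_def I_def by auto
    hence "((\<lambda>t. x i t - x0) has_vector_derivative D i t - 0) (at t)"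
      by (intro has_vector_derivative_diff has_vector_derivative_const)
    thus ?thesis unfolding e_def by simp
  qed
  have cg: "continuous_on UNIV (g j i)" if "i \<in> I" "j \<in> N i" for i j
  proof -
    have c1: "continuous_on UNIV (e j)" using ce NI that by blast
    have c2: "continuous_on UNIV (\<lambda>s. K j i *v e j s)"
      by (rule continuous_on_compose2[OF matrix_vector_mult_linear_continuous_on c1]) auto
    show ?thesis unfolding g_def qf_def using c1 c2 by (intro continuous_intros)
  qed
  have gnn: "g j i s \<ge> 0" if "i \<in> I" "j \<in> N i" for i j s
    using gains that qf_nonneg unfolding g_def I_def by blast
  have dF: "(F j i has_real_derivative g j i u) (at u)" if "i \<in> I" "j \<in> N i" "a < u" for i j u
    unfolding F_def using ftc_deriv[OF cg[OF that(1,2)] that(3)] .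
  have Fmono: "F j i u \<le> F j i w" if "i \<in> I" "j \<in> N i" "a < u" "u \<le> w" for i j u w
    using that(4)
  proof (rule DERIV_nonneg_imp_nondecreasing)
    fix y assume "u \<le> y" "y \<le> w"
    hence "a < y" using that by linarith
    thus "\<exists>d. (F j i has_real_derivative d) (at y) \<and> 0 \<le> d"
      using dF[OF that(1,2)] gnn[OF that(1,2)] by blast
  qed
  have qnn: "q j i t \<ge> 0" if "i \<in> I" "j \<in> N i" for i j t
    using gains that qf_nonneg unfolding q_def I_def by blast
  have pnn: "p i t \<ge> 0" if "i \<in> I" for i t
    using gamma01 leader_gains that qf_nonneg unfolding p_def I_def by fastforce
  have Anns: "(\<Sum>j\<in>N i. q j i t / 2) + p i t \<ge> 0" if "i \<in> I" for i t
    using qnn pnn that by (auto intro!: add_nonneg_nonneg sum_nonneg)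
  have fnn: "f t \<ge> 0" for t
    unfolding f_def using Anns by (auto intro!: sum_nonneg)
  have finI: "finite I" unfolding I_def by simp
  have fq: "q j i t / 2 \<le> f t" if "i \<in> I" "j \<in> N i" for i j t
  proof -
    have "q j i t / 2 \<le> (\<Sum>j\<in>N i. q j i t / 2)"
      using that finN qnn by (intro member_le_sum) auto
    also have "\<dots> \<le> (\<Sum>j\<in>N i. q j i t / 2) + p i t" using pnn that by simp
    also have "\<dots> \<le> f t" unfolding f_def
      using that finI Anns by (intro member_le_sum[of i I "\<lambda>i. (\<Sum>j\<in>N i. q j i t / 2) + p i t"]) auto
    finally show ?thesis .
  qed
  have fp: "p i t \<le> f t" if "i \<in> I" for i t
  proof -
    have "p i t \<le> (\<Sum>j\<in>N i. q j i t / 2) + p i t"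
      using that finN qnn by (simp add: sum_nonneg)
    also have "\<dots> \<le> f t" unfolding f_def
      using that finI Anns by (intro member_le_sum[of i I "\<lambda>i. (\<Sum>j\<in>N i. q j i t / 2) + p i t"]) auto
    finally show ?thesis .
  qed

  have dV: "(V has_real_derivative - f t) (at t)" if t: "t > 0" for t
  proof -
    have a0: "a < 0" unfolding a_def using Tm0 by simp
    have dP: "((\<lambda>t. e i t \<bullet> e i t / 2 + (\<Sum>j\<in>N i. (F j i t - F j i (t - T j i)) / 2)) has_real_derivative
        (2 * (e i t \<bullet> D i t) / 2 + (\<Sum>j\<in>N i. (g j i t - g j i (t - T j i) * 1) / 2))) (at t)"
      if i: "i \<in> I" for i
    proof (intro DERIV_add DERIV_cdivide DERIV_sum DERIV_diff)
      show "((\<lambda>t. e i t \<bullet> e i t) has_real_derivative 2 * (e i t \<bullet> D i t)) (at t)"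
        by (rule inner_sq_deriv[OF de[OF i t]])
      fix j assume j: "j \<in> N i"
      show "(F j i has_real_derivative g j i t) (at t)" using dF[OF i j] a0 t by simp
      have "a < t - T j i" using TTm[OF i j] t unfolding a_def by linarith
      show "((\<lambda>t. F j i (t - T j i)) has_real_derivative g j i (t - T j i) * 1) (at t)"
      proof (rule DERIV_chain2[where f = "F j i" and g = "\<lambda>t. t - T j i"])
        show "(F j i has_real_derivative g j i (t - T j i)) (at (t - T j i))"
          using dF[OF i j \<open>a < t - T j i\<close>] .
        show "((\<lambda>t. t - T j i) has_real_derivative 1) (at t)"
          by (auto intro!: derivative_eq_intros)
      qed
    qed
    have Ei: "2 * (e i t \<bullet> D i t) / 2 + (\<Sum>j\<in>N i. (g j i t - g j i (t - T j i) * 1) / 2)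
        = - ((\<Sum>j\<in>N i. q j i t / 2) + p i t) + (\<Sum>j\<in>N i. qf (K j i) (e j t) - qf (K j i) (e i t)) / 2"
      if i: "i \<in> I" for i
    proof -
      have K0: "e i t \<bullet> (\<gamma> i *\<^sub>R (K 0 i *v (x0 - x i t))) = - p i t"
        unfolding p_def qf_def e_def
        by (simp add: matrix_vector_mult_diff_distrib inner_diff_left inner_diff_right algebra_simps)
      have eD: "e i t \<bullet> D i t = (\<Sum>j\<in>N i. e i t \<bullet> (K j i *v (e j (t - T j i) - e i t))) - p i t"
        unfolding D_def inner_add_right inner_sum_right K0 by (simp add: e_def)
      have "(\<Sum>j\<in>N i. e i t \<bullet> (K j i *v (e j (t - T j i) - e i t))) + (\<Sum>j\<in>N i. (g j i t - g j i (t - T j i) * 1) / 2)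
          = (\<Sum>j\<in>N i. e i t \<bullet> (K j i *v (e j (t - T j i) - e i t)) + (g j i t - g j i (t - T j i) * 1) / 2)"
        by (simp add: sum.distrib)
      also have "\<dots> = (\<Sum>j\<in>N i. - q j i t / 2 + (qf (K j i) (e j t) - qf (K j i) (e i t)) / 2)"
      proof (rule sum.cong[OF refl])
        fix j assume j: "j \<in> N i"
        have "transpose (K j i) = K j i" using gains i j unfolding I_def sym_pos_def_def by auto
        thus "e i t \<bullet> (K j i *v (e j (t - T j i) - e i t)) + (g j i t - g j i (t - T j i) * 1) / 2
            = - q j i t / 2 + (qf (K j i) (e j t) - qf (K j i) (e i t)) / 2"
          unfolding g_def q_def by (simp add: key_id)
      qed
      also have "\<dots> = - (\<Sum>j\<in>N i. q j i t / 2) + (\<Sum>j\<in>N i. qf (K j i) (e j t) - qf (K j i) (e i t)) / 2"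
      proof -
        have "(\<Sum>j\<in>N i. - q j i t / 2 + (qf (K j i) (e j t) - qf (K j i) (e i t)) / 2)
            = (\<Sum>j\<in>N i. - q j i t / 2) + (\<Sum>j\<in>N i. (qf (K j i) (e j t) - qf (K j i) (e i t)) / 2)"
          by (rule sum.distrib)
        also have "(\<Sum>j\<in>N i. - q j i t / 2) = - (\<Sum>j\<in>N i. q j i t / 2)"
          by (simp add: sum_negf[symmetric])
        also have "(\<Sum>j\<in>N i. (qf (K j i) (e j t) - qf (K j i) (e i t)) / 2)
            = (\<Sum>j\<in>N i. qf (K j i) (e j t) - qf (K j i) (e i t)) / 2"
          by (rule sum_divide_distrib[symmetric])
        finally show ?thesis .
      qed
      finally show ?thesis using eD by linarith
    qed
    have "(V has_real_derivative (\<Sum>i\<in>I. 2 * (e i t \<bullet> D i t) / 2 + (\<Sum>j\<in>N i. (g j i t - g j i (t - T j i) * 1) / 2))) (at t)"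
      unfolding V_def by (rule DERIV_sum) (rule dP)
    moreover have "(\<Sum>i\<in>I. 2 * (e i t \<bullet> D i t) / 2 + (\<Sum>j\<in>N i. (g j i t - g j i (t - T j i) * 1) / 2))
        = - f t + (\<Sum>i\<in>I. \<Sum>j\<in>N i. qf (K j i) (e j t) - qf (K j i) (e i t)) / 2"
    proof -
      have "(\<Sum>i\<in>I. 2 * (e i t \<bullet> D i t) / 2 + (\<Sum>j\<in>N i. (g j i t - g j i (t - T j i) * 1) / 2))
          = (\<Sum>i\<in>I. - ((\<Sum>j\<in>N i. q j i t / 2) + p i t) + (\<Sum>j\<in>N i. qf (K j i) (e j t) - qf (K j i) (e i t)) / 2)"
        using Ei by (rule sum.cong[OF refl])
      also have "\<dots> = (\<Sum>i\<in>I. - ((\<Sum>j\<in>N i. q j i t / 2) + p i t)) + (\<Sum>i\<in>I. (\<Sum>j\<in>N i. qf (K j i) (e j t) - qf (K j i) (e i t)) / 2)"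
        by (rule sum.distrib)
      also have "(\<Sum>i\<in>I. - ((\<Sum>j\<in>N i. q j i t / 2) + p i t)) = - f t"
        unfolding f_def by (rule sum_negf)
      also have "(\<Sum>i\<in>I. (\<Sum>j\<in>N i. qf (K j i) (e j t) - qf (K j i) (e i t)) / 2)
          = (\<Sum>i\<in>I. \<Sum>j\<in>N i. qf (K j i) (e j t) - qf (K j i) (e i t)) / 2"
        by (rule sum_divide_distrib[symmetric])
      finally show ?thesis .
    qed
    moreover have "(\<Sum>i\<in>I. \<Sum>j\<in>N i. qf (K j i) (e j t) - qf (K j i) (e i t)) = 0"
      unfolding I_def by (rule balance[OF nbrs link_structure])
    ultimately show ?thesis by simp
  qed

  have Pnn: "e i t \<bullet> e i t / 2 \<le> e i t \<bullet> e i t / 2 + (\<Sum>j\<in>N i. (F j i t - F j i (t - T j i)) / 2)"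
    if "i \<in> I" "t > 0" for i t
  proof -
    have "F j i (t - T j i) \<le> F j i t" if "j \<in> N i" for j
      using Fmono[OF \<open>i \<in> I\<close> that] TTm[OF \<open>i \<in> I\<close> that] \<open>t > 0\<close> unfolding a_def by auto
    thus ?thesis by (auto intro!: sum_nonneg)
  qed
  have Vlow: "e i t \<bullet> e i t / 2 \<le> V t" if "i \<in> I" "t > 0" for i t
  proof -
    have "e i t \<bullet> e i t / 2 \<le> e i t \<bullet> e i t / 2 + (\<Sum>j\<in>N i. (F j i t - F j i (t - T j i)) / 2)"
      using Pnn that by blast
    also have "\<dots> \<le> V t" unfolding V_def
      using that finI Pnn
      by (intro member_le_sum[of i I "\<lambda>i. e i t \<bullet> e i t / 2 + (\<Sum>j\<in>N i. (F j i t - F j i (t - T j i)) / 2)"])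
        (auto intro: order_trans[rotated])
    finally show ?thesis .
  qed
  have Vnn: "V t \<ge> 0" if "t > 0" for t
    unfolding V_def using Pnn that
    by (intro sum_nonneg) (meson divide_nonneg_pos inner_ge_zero order_trans zero_less_numeral)
  have Vmono: "V t \<le> V s" if "0 < s" "s \<le> t" for s t
    using that(2)
  proof (rule DERIV_nonpos_imp_nonincreasing)
    fix y assume "s \<le> y" "y \<le> t"
    hence "y > 0" using that by linarith
    thus "\<exists>d. (V has_real_derivative d) (at y) \<and> d \<le> 0" using dV fnn
      by (intro exI[of _ "- f y"]) auto
  qed
  define B where "B = sqrt (2 * V 1)"
  have B0: "B \<ge> 0" unfolding B_def using Vnn[of 1] by simp
  have eB: "norm (e i t) \<le> B" if "i \<in> I" "t \<ge> 1" for i t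
  proof -
    have "(norm (e i t))^2 = e i t \<bullet> e i t" by (simp add: power2_norm_eq_inner)
    also have "\<dots> \<le> 2 * V t"
    proof -
      have "t > 0" using that by linarith
      hence "e i t \<bullet> e i t / 2 \<le> V t" using Vlow[OF that(1)] by blast
      thus ?thesis by linarith
    qed
    also have "\<dots> \<le> 2 * V 1" using Vmono[of 1 t] that by simp
    finally show ?thesis unfolding B_def by (rule real_le_rsqrt)
  qed
  define t1 where "t1 = Tm + 1"
  define C where "C = (\<lambda>i. (\<Sum>j\<in>N i. kn (K j i) * (2 * B)) + \<bar>\<gamma> i\<bar> * (kn (K 0 i) * B))"
  have C0: "C i \<ge> 0" for i unfolding C_def using B0 kn_nonneg
    by (intro add_nonneg_nonneg sum_nonneg mult_nonneg_nonneg) auto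
  have DB: "norm (D i t) \<le> C i" if i: "i \<in> I" and t: "t > t1" for i t
  proof -
    have "norm (D i t) \<le> norm (\<Sum>j\<in>N i. K j i *v (x j (t - T j i) - x i t)) + norm (\<gamma> i *\<^sub>R (K 0 i *v (x0 - x i t)))"
      unfolding D_def by (rule norm_triangle_ineq)
    also have "norm (\<Sum>j\<in>N i. K j i *v (x j (t - T j i) - x i t)) \<le> (\<Sum>j\<in>N i. norm (K j i *v (x j (t - T j i) - x i t)))"
      by (rule norm_sum)
    also have "\<dots> \<le> (\<Sum>j\<in>N i. kn (K j i) * (2 * B))"
    proof (rule sum_mono)
      fix j assume j: "j \<in> N i"
      have "norm (x j (t - T j i) - x i t) = norm (e j (t - T j i) - e i t)" unfolding e_def by simp
      also have "\<dots> \<le> norm (e j (t - T j i)) + norm (e i t)" by (rule norm_triangle_ineq4)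
      also have "\<dots> \<le> B + B"
        using eB[OF NI[OF i j], of "t - T j i"] eB[OF i, of t] TTm[OF i j] t Tm0 unfolding t1_def by auto
      finally have "norm (x j (t - T j i) - x i t) \<le> 2 * B" by simp
      thus "norm (K j i *v (x j (t - T j i) - x i t)) \<le> kn (K j i) * (2 * B)"
        using kn_bound[of "K j i"] kn_nonneg[of "K j i"] by (meson mult_left_mono order_trans)
    qed
    also have "norm (\<gamma> i *\<^sub>R (K 0 i *v (x0 - x i t))) \<le> \<bar>\<gamma> i\<bar> * (kn (K 0 i) * B)"
    proof -
      have "norm (x0 - x i t) \<le> B" using eB[OF i, of t] t Tm0 unfolding t1_def e_def
        by (simp add: norm_minus_commute)
      hence "norm (K 0 i *v (x0 - x i t)) \<le> kn (K 0 i) * B"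
        using kn_bound[of "K 0 i"] kn_nonneg[of "K 0 i"] by (meson mult_left_mono order_trans)
      thus ?thesis by (simp add: mult_left_mono)
    qed
    finally show ?thesis unfolding C_def by simp
  qed
  have lipe: "norm (e i t - e i s) \<le> C i * \<bar>t - s\<bar>" if "i \<in> I" "s \<ge> t1" "t \<ge> t1" for i s t
  proof (rule lip_from_deriv[OF ce[OF that(1)], of t1 "D i"])
    show "\<forall>t>t1. (e i has_vector_derivative D i t) (at t)"
      using de[OF that(1)] Tm0 unfolding t1_def by auto
    show "\<forall>t>t1. norm (D i t) \<le> C i" using DB[OF that(1)] by auto
  qed (use that in auto)
  define t2 where "t2 = t1 + Tm"
  have t2pos: "t2 > 0" unfolding t2_def t1_def using Tm0 by simp
  have barb: "(h \<longlongrightarrow> 0) at_top"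
    if "\<forall>t\<ge>t2. 0 \<le> h t" "\<forall>t\<ge>t2. h t \<le> f t"
       "\<forall>s\<ge>t2. \<forall>t\<ge>t2. \<bar>h t - h s\<bar> \<le> L * \<bar>t - s\<bar>" "L > 0" for h L
  proof (rule barbalat[of t2 V f h L])
    show "\<forall>t\<ge>t2. (V has_real_derivative - f t) (at t)" using dV t2pos by auto
    show "\<forall>t\<ge>t2. 0 \<le> V t" using Vnn t2pos by auto
  qed (use that in auto)

  have qlim: "(q j i \<longlongrightarrow> 0) at_top" if i: "i \<in> I" and j: "j \<in> N i" for i j
  proof -
    define d where "d = (\<lambda>t. e j (t - T j i) - e i t)"
    have dM: "\<forall>t\<ge>t2. norm (d t) \<le> 2 * B"
    proof (intro allI impI)
      fix t assume t: "t \<ge> t2"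
      have "norm (d t) \<le> norm (e j (t - T j i)) + norm (e i t)" unfolding d_def by (rule norm_triangle_ineq4)
      also have "\<dots> \<le> B + B"
        using eB[OF NI[OF i j], of "t - T j i"] eB[OF i, of t] TTm[OF i j] t Tm0
        unfolding t2_def t1_def by auto
      finally show "norm (d t) \<le> 2 * B" by simp
    qed
    have dL: "\<forall>s\<ge>t2. \<forall>t\<ge>t2. norm (d t - d s) \<le> (C j + C i) * \<bar>t - s\<bar>"
    proof (intro allI impI)
      fix s t assume s: "s \<ge> t2" and t: "t \<ge> t2"
      have "d t - d s = (e j (t - T j i) - e j (s - T j i)) - (e i t - e i s)" unfolding d_def by simp
      hence "norm (d t - d s) \<le> norm (e j (t - T j i) - e j (s - T j i)) + norm (e i t - e i s)"
        by (metis norm_triangle_ineq4)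
      also have "\<dots> \<le> C j * \<bar>(t - T j i) - (s - T j i)\<bar> + C i * \<bar>t - s\<bar>"
        using lipe[OF NI[OF i j], of "s - T j i" "t - T j i"] lipe[OF i, of s t] s t TTm[OF i j] Tm0
        unfolding t2_def by (intro add_mono) auto
      finally show "norm (d t - d s) \<le> (C j + C i) * \<bar>t - s\<bar>" by (simp add: distrib_right)
    qed
    have lipq: "\<forall>s\<ge>t2. \<forall>t\<ge>t2. \<bar>qf (K j i) (d t) / 2 - qf (K j i) (d s) / 2\<bar>
        \<le> (kn (K j i) * (2 * B) * (C j + C i) + 1) * \<bar>t - s\<bar>"
      by (rule qf_lip[OF dM _ dL]) (use C0 in \<open>auto intro: add_nonneg_nonneg\<close>)
    have pos: "kn (K j i) * (2 * B) * (C j + C i) + 1 > 0"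
    proof -
      have "0 \<le> kn (K j i) * (2 * B) * (C j + C i)"
        using kn_nonneg[of "K j i"] B0 C0[of i] C0[of j] by (intro mult_nonneg_nonneg add_nonneg_nonneg) auto
      thus ?thesis by linarith
    qed
    have "((\<lambda>t. qf (K j i) (d t) / 2) \<longlongrightarrow> 0) at_top"
    proof (rule barb[OF _ _ lipq pos])
      show "\<forall>t\<ge>t2. 0 \<le> qf (K j i) (d t) / 2" using qnn[OF i j] unfolding q_def d_def by auto
      show "\<forall>t\<ge>t2. qf (K j i) (d t) / 2 \<le> f t" using fq[OF i j] unfolding q_def d_def by auto
    qed
    hence "((\<lambda>t. 2 * (qf (K j i) (d t) / 2)) \<longlongrightarrow> 2 * 0) at_top" by (rule tendsto_mult_left)
    thus ?thesis unfolding q_def d_def by simp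
  qed
  have plim: "(e i \<longlongrightarrow> 0) at_top" if i: "i \<in> I" and gi: "\<gamma> i = 1" for i
  proof -
    have K0: "sym_pos_def (K 0 i)" using leader_gains i gi unfolding I_def by auto
    have dM: "\<forall>t\<ge>t2. norm (e i t) \<le> B"
      using eB[OF i] unfolding t2_def t1_def using Tm0 by auto
    have dL: "\<forall>s\<ge>t2. \<forall>t\<ge>t2. norm (e i t - e i s) \<le> C i * \<bar>t - s\<bar>"
      using lipe[OF i] Tm0 unfolding t2_def by auto
    have lipq: "\<forall>s\<ge>t2. \<forall>t\<ge>t2. \<bar>qf (K 0 i) (e i t) / 2 - qf (K 0 i) (e i s) / 2\<bar>
        \<le> (kn (K 0 i) * B * C i + 1) * \<bar>t - s\<bar>"
      by (rule qf_lip[OF dM C0 dL])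
    have pos: "kn (K 0 i) * B * C i + 1 > 0"
    proof -
      have "0 \<le> kn (K 0 i) * B * C i"
        using kn_nonneg[of "K 0 i"] B0 C0[of i] by (intro mult_nonneg_nonneg) auto
      thus ?thesis by linarith
    qed
    have "((\<lambda>t. qf (K 0 i) (e i t) / 2) \<longlongrightarrow> 0) at_top"
    proof (rule barb[OF _ _ lipq pos])
      show "\<forall>t\<ge>t2. 0 \<le> qf (K 0 i) (e i t) / 2" using qf_nonneg[OF K0] by auto
      show "\<forall>t\<ge>t2. qf (K 0 i) (e i t) / 2 \<le> f t"
      proof (intro allI impI)
        fix t
        have "qf (K 0 i) (e i t) / 2 \<le> p i t" using qf_nonneg[OF K0] gi unfolding p_def by simp
        thus "qf (K 0 i) (e i t) / 2 \<le> f t" using fp[OF i] by (meson order_trans)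
      qed
    qed
    hence "((\<lambda>t. 2 * (qf (K 0 i) (e i t) / 2)) \<longlongrightarrow> 2 * 0) at_top" by (rule tendsto_mult_left)
    hence "((\<lambda>t. qf (K 0 i) (e i t)) \<longlongrightarrow> 0) at_top" by simp
    thus ?thesis by (rule qf_tendsto_zero[OF K0])
  qed

  have propg: "k = 0 \<or> (k \<in> I \<and> (e k \<longlongrightarrow> 0) at_top)" if "(0, k) \<in> (net_adj n N \<gamma>)\<^sup>*" for k
    using that
  proof (induction rule: rtrancl_induct)
    case base thus ?case by simp
  next
    case (step a b)
    from step.hyps(2) consider "(a, b) \<in> links n N" | "(b, a) \<in> links n N"
      | "a = 0" "b \<in> I" "\<gamma> b = 1" | "b = 0"
      unfolding net_adj_def I_def by blast
    thus ?case
    proof cases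
      case 1
      hence b: "b \<in> I" and ab: "a \<in> N b" unfolding links_def I_def by auto
      have aI: "a \<in> I" using NI[OF b ab] .
      hence "a \<noteq> 0" unfolding I_def by auto
      hence ea: "(e a \<longlongrightarrow> 0) at_top" using step.IH by blast
      have "((\<lambda>t. e a (t - T a b) - e b t) \<longlongrightarrow> 0) at_top"
        using qlim[OF b ab] gains b ab unfolding q_def I_def
        by (intro qf_tendsto_zero[of "K a b"]) auto
      moreover have "((\<lambda>t. e a (t - T a b)) \<longlongrightarrow> 0) at_top"
        using shift_tendsto[OF ea, of "- T a b"] by simp
      ultimately have "((\<lambda>t. e a (t - T a b) - (e a (t - T a b) - e b t)) \<longlongrightarrow> 0 - 0) at_top"
        by (intro tendsto_diff)
      thus ?thesis using b by simp
    next
      case 2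
      hence aI: "a \<in> I" and ba: "b \<in> N a" unfolding links_def I_def by auto
      have bI: "b \<in> I" using NI[OF aI ba] .
      have "a \<noteq> 0" using aI unfolding I_def by auto
      hence ea: "(e a \<longlongrightarrow> 0) at_top" using step.IH by blast
      have "((\<lambda>t. e b (t - T b a) - e a t) \<longlongrightarrow> 0) at_top"
        using qlim[OF aI ba] gains aI ba unfolding q_def I_def
        by (intro qf_tendsto_zero[of "K b a"]) auto
      hence "((\<lambda>t. (e b (t - T b a) - e a t) + e a t) \<longlongrightarrow> 0 + 0) at_top"
        using ea by (intro tendsto_add)
      hence "((\<lambda>t. e b (t - T b a)) \<longlongrightarrow> 0) at_top" by simp
      hence "((\<lambda>t. e b ((t + T b a) - T b a)) \<longlongrightarrow> 0) at_top"
        by (rule shift_tendsto)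
      thus ?thesis using bI by simp
    next
      case 3 thus ?thesis using plim by blast
    next
      case 4 thus ?thesis by simp
    qed
  qed
  show ?thesis
  proof
    fix i assume i: "i \<in> {1..n}"
    have "(0, i) \<in> (net_adj n N \<gamma>)\<^sup>*" using net_connected i unfolding network_connected_def by blast
    hence "(e i \<longlongrightarrow> 0) at_top" using propg i unfolding I_def by force
    hence "((\<lambda>t. e i t + x0) \<longlongrightarrow> 0 + x0) at_top" by (intro tendsto_add tendsto_const)
    thus "(x i \<longlongrightarrow> x0) at_top" unfolding e_def by simp
  qed
qed

end
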